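(* Let $X\in\mathbb{R}^{n\times p}$ have rank $p$, let $P\in\mathbb{R}^{n\times n}$ be symmetric, let $S_K(P)$ be the subspace spanned by the eigenvectors of $P$ associated with its $K$ largest eigenvalues, and let $\mathcal{R}=\mathrm{col}(X)\cap S_K(P)$. Suppose $(\beta,\theta,\alpha)$ and $(\beta',\theta',\alpha')$, with $\beta,\theta,\beta',\theta'\in\mathbb{R}^p$ and $\alpha,\alpha'\in\mathbb{R}^n$, both satisfy $$X\beta+X\theta+\alpha = X\beta'+X\theta'+\alpha' \;(=\mathbb{E}Y)$$ and both satisfy the constraints $X\theta\in\mathcal{R}$, $X\beta\perp\mathcal{R}$, $\alpha\in S_K(P)$, $\alpha\perp\mathcal{R}$ (respectively with primes). Then $\beta=\beta'$, $\theta=\theta'$ and $\alpha=\alpha'$.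
   Context: This is the identifiability statement for the regression model with network effects $\mathbb{E}Y = X\beta+X\theta+\alpha$ subject to the stated constraints; $\mathrm{col}(X)$ denotes the column space of $X$. *)

theory Defs
  imports "HOL-Analysis.Analysis"
begin

definition top_eigenspace :: "real^'n^'n \<Rightarrow> nat \<Rightarrow> (real^'n) set \<Rightarrow> bool" where
  "top_eigenspace P K S \<longleftrightarrow>
     (\<exists>(v :: nat \<Rightarrow> real^'n) (lam :: nat \<Rightarrow> real).
        (\<forall>i<CARD('n). P *v v i = lam i *\<^sub>R v i) \<and>
        (\<forall>i<CARD('n). \<forall>j<CARD('n). v i \<bullet> v j = (if i = j then 1 else 0)) \<and>
        (\<forall>i j. i \<le> j \<and> j < CARD('n) \<longrightarrow> lam j \<le> lam i) \<and>
        S = span (v ` {i. i < K \<and> i < CARD('n)}))"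

definition col :: "real^'p^'n \<Rightarrow> (real^'n) set" where
  "col X = range (\<lambda>b. X *v b)"

end

theory Submission
  imports Defs
begin

theorem proposition1:
  fixes X :: "real^'p^'n" and P :: "real^'n^'n" and K :: nat and S :: "(real^'n) set"
    and \<beta> \<theta> \<beta>' \<theta>' :: "real^'p" and \<alpha> \<alpha>' :: "real^'n"
  assumes rankX: "rank X = CARD('p)"
    and symP: "transpose P = P"
    and SK: "top_eigenspace P K S"
    and eq: "X *v \<beta> + X *v \<theta> + \<alpha> = X *v \<beta>' + X *v \<theta>' + \<alpha>'"
    and c1: "X *v \<theta> \<in> col X \<inter> S"
    and c2: "\<forall>r \<in> col X \<inter> S. orthogonal (X *v \<beta>) r"
    and c3: "\<alpha> \<in> S"
    and c4: "\<forall>r \<in> col X \<inter> S. orthogonal \<alpha> r"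
    and c1': "X *v \<theta>' \<in> col X \<inter> S"
    and c2': "\<forall>r \<in> col X \<inter> S. orthogonal (X *v \<beta>') r"
    and c3': "\<alpha>' \<in> S"
    and c4': "\<forall>r \<in> col X \<inter> S. orthogonal \<alpha>' r"
  shows "\<beta> = \<beta>' \<and> \<theta> = \<theta>' \<and> \<alpha> = \<alpha>'"
proof -
  obtain v :: "nat \<Rightarrow> real^'n" where Sdef: "S = span (v ` {i. i < K \<and> i < CARD('n)})"
    using SK unfolding top_eigenspace_def by blast
  have subS: "subspace S" unfolding Sdef by simp
  have inj: "inj ((*v) X)" using rankX full_rank_injective by blast
  define d where "d = X *v \<beta> - X *v \<beta>'"
  define t where "t = X *v \<theta> - X *v \<theta>'"
  define a where "a = \<alpha> - \<alpha>'"
  have sum0: "d + t + a = 0" using eq unfolding d_def t_def a_def by (simp add: algebra_simps)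
  have dcol: "d \<in> col X" unfolding d_def col_def
    by (metis matrix_vector_mult_diff_distrib rangeI)
  have tcol: "t \<in> col X" unfolding t_def col_def
    by (metis matrix_vector_mult_diff_distrib rangeI)
  have tS: "t \<in> S" unfolding t_def using c1 c1' subS subspace_diff by blast
  have aS: "a \<in> S" unfolding a_def using c3 c3' subS subspace_diff by blast
  have dorth: "\<And>r. r \<in> col X \<inter> S \<Longrightarrow> d \<bullet> r = 0"
    using c2 c2' unfolding d_def orthogonal_def by (simp add: inner_diff_left)
  have aorth: "\<And>r. r \<in> col X \<inter> S \<Longrightarrow> a \<bullet> r = 0"
    using c4 c4' unfolding a_def orthogonal_def by (simp add: inner_diff_left)
  have tR: "t \<in> col X \<inter> S" using tcol tS by blast
  have "t = - d - a" using sum0 by (simp add: algebra_simps eq_neg_iff_add_eq_0)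
  then have "t \<bullet> t = - (d \<bullet> t) - a \<bullet> t" by (simp add: inner_diff_left)
  then have "t \<bullet> t = 0" using dorth[OF tR] aorth[OF tR] by simp
  then have t0: "t = 0" by simp
  then have "d = - a" using sum0 by (simp add: eq_neg_iff_add_eq_0)
  then have "d \<in> S" using aS subS by (simp add: subspace_neg)
  then have "d \<bullet> d = 0" using dorth dcol by blast
  then have d0: "d = 0" by simp
  then have a0: "a = 0" using sum0 t0 by simp
  have "X *v \<beta> = X *v \<beta>'" using d0 d_def by simp
  then have "\<beta> = \<beta>'" using inj by (simp add: inj_eq)
  moreover have "X *v \<theta> = X *v \<theta>'" using t0 t_def by simp
  then have "\<theta> = \<theta>'" using inj by (simp add: inj_eq)
  moreover have "\<alpha> = \<alpha>'" using a0 a_def by simp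
  ultimately show ?thesis by simp
qed

end
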